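(* Let $m\ge1$, $n\ge1$, $N>2n$, and let $\mathbf y$ be a stationary reciprocal process of order $n$ on $\mathbb Z_N$ with conjugate process $\mathbf d(t)=\mathbf y(t)-\hat{\mathbb E}[\mathbf y(t)\mid\mathbf y(s),s\ne t]$. Then there exist constant matrices $F_{-n},\dots,F_{-1},F_1,\dots,F_n\in\mathbb R^{m\times m}$ such that, with $F_0=I_m$, $$\sum_{k=-n}^{n}F_k\,\mathbf y(t-k)=\mathbf d(t),\qquad t=1,\dots,N,$$ where the values outside $[1,N]$ are given by the cyclic boundary conditions $\mathbf y(k)=\mathbf y(N+k)$, $k=-n+1,\dots,n$. Equivalently, $\mathbf F_N\mathbf y=\mathbf d$, where $\mathbf F_N$ is the $mN\times mN$ banded block-circulant matrix whose first block column is $(I_m,F_1,\dots,F_n,0,\dots,0,F_{-n},\dots,F_{-1})$. If $\mathbf y$ is full rank, this description is unique.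
   Context: A process on $\mathbb Z_N$ is a zero-mean second-order $\mathbb R^m$-valued process $\{\mathbf y(t)\}_{t=1}^N$, time indices taken modulo $N$, whose covariance $\boldsymbol\Sigma_N=\mathbb E\,\mathbf y\mathbf y^\top$ is symmetric block-circulant (its $(i,j)$ block depends only on $(i-j)\bmod N$, so the block-circulant matrix is determined by its first block column); such a process is stationary. Full rank means $\boldsymbol\Sigma_N>0$. $\hat{\mathbb E}[\cdot\mid\cdot]$ is orthogonal projection onto the closed linear span of the scalar components of the conditioning variables. Subspaces $\mathcal A,\mathcal B$ are conditionally orthogonal given $\mathcal C$ if $a-\hat{\mathbb E}[a\mid\mathcal C]$ and $b-\hat{\mathbb E}[b\mid\mathcal C]$ are uncorrelated for all $a\in\mathcal A,b\in\mathcal B$. The process is reciprocal of order $n$ if for every cyclic interval $(t_1,t_2)$ the variables $\{\mathbf y(t):t\in(t_1,t_2)\}$ are conditionally orthogonal to $\{\mathbf y(s):s\notin(t_1,t_2)\}$ given $\mathbf y(t_1-n+1),\dots,\mathbf y(t_1),\mathbf y(t_2),\dots,\mathbf y(t_2+n-1)$. *)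

theory Defs
  imports "HOL-Analysis.Analysis"
begin

text \<open>A second-order R^m-valued process on Z_N is modelled as a family of vectors
  y t i (time t :: int, component i < m) in a real inner product space
  (the Hilbert space of zero-mean finite-variance random variables, inner product =
  covariance), periodic in t with period N.\<close>

definition proj :: "'a::real_inner set \<Rightarrow> 'a \<Rightarrow> 'a" where
  "proj S x = (THE p. p \<in> span S \<and> (\<forall>s\<in>S. inner (x - p) s = 0))"

definition cond_orth :: "'a::real_inner set \<Rightarrow> 'a set \<Rightarrow> 'a set \<Rightarrow> bool" where
  "cond_orth A B C \<longleftrightarrow>
     (\<forall>a\<in>span A. \<forall>b\<in>span B. inner (a - proj C a) (b - proj C b) = 0)"

definition vars :: "(int \<Rightarrow> nat \<Rightarrow> 'a) \<Rightarrow> nat \<Rightarrow> int set \<Rightarrow> 'a set" where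
  "vars y m T = {y t i | t i. t \<in> T \<and> i < m}"

definition periodic_proc :: "(int \<Rightarrow> nat \<Rightarrow> 'a) \<Rightarrow> nat \<Rightarrow> bool" where
  "periodic_proc y N \<longleftrightarrow> (\<forall>t i. y (t + int N) i = y t i)"

definition stationary :: "(int \<Rightarrow> nat \<Rightarrow> 'a::real_inner) \<Rightarrow> nat \<Rightarrow> bool" where
  "stationary y m \<longleftrightarrow>
     (\<forall>t s k i j. i < m \<longrightarrow> j < m \<longrightarrow> inner (y (t + k) i) (y (s + k) j) = inner (y t i) (y s j))"

definition reciprocal :: "(int \<Rightarrow> nat \<Rightarrow> 'a::real_inner) \<Rightarrow> nat \<Rightarrow> nat \<Rightarrow> nat \<Rightarrow> bool" where
  "reciprocal y m N n \<longleftrightarrow>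
     (\<forall>t1 t2::int. t1 < t2 \<longrightarrow>
        cond_orth (vars y m {t. t1 < t \<and> t < t2})
                  (vars y m {s. \<forall>t. t1 < t \<and> t < t2 \<longrightarrow> s mod int N \<noteq> t mod int N})
                  (vars y m ({t1 - int n + 1 .. t1} \<union> {t2 .. t2 + int n - 1})))"

definition conj_proc :: "(int \<Rightarrow> nat \<Rightarrow> 'a::real_inner) \<Rightarrow> nat \<Rightarrow> nat \<Rightarrow> int \<Rightarrow> nat \<Rightarrow> 'a" where
  "conj_proc y m N t i = y t i - proj (vars y m {s. s mod int N \<noteq> t mod int N}) (y t i)"

definition full_rank :: "(int \<Rightarrow> nat \<Rightarrow> 'a::real_inner) \<Rightarrow> nat \<Rightarrow> nat \<Rightarrow> bool" where
  "full_rank y m N \<longleftrightarrow>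
     (\<forall>c :: int \<Rightarrow> nat \<Rightarrow> real. (\<exists>t\<in>{1..int N}. \<exists>i<m. c t i \<noteq> 0) \<longrightarrow>
        (\<Sum>t\<in>{1..int N}. \<Sum>i<m. \<Sum>s\<in>{1..int N}. \<Sum>j<m.
            c t i * c s j * inner (y t i) (y s j)) > 0)"

text \<open>F k i j is the (i,j) entry of the m x m matrix F_k, k = -n..n.\<close>
definition recip_model :: "(int \<Rightarrow> nat \<Rightarrow> nat \<Rightarrow> real) \<Rightarrow> (int \<Rightarrow> nat \<Rightarrow> 'a::real_inner)
    \<Rightarrow> nat \<Rightarrow> nat \<Rightarrow> nat \<Rightarrow> (int \<Rightarrow> nat \<Rightarrow> 'a) \<Rightarrow> bool" where
  "recip_model F y m n N d \<longleftrightarrow>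
     (\<forall>i<m. \<forall>j<m. F 0 i j = (if i = j then 1 else 0)) \<and>
     (\<forall>t\<in>{1..int N}. \<forall>i<m.
        (\<Sum>k\<in>{- int n..int n}. \<Sum>j<m. F k i j *\<^sub>R y (t - k) j) = d t i)"

end

theory Submission
  imports Defs
begin

lemma orth_span:
  fixes v :: "'a::real_inner"
  assumes "\<forall>s\<in>S. inner v s = 0" and "w \<in> span S"
  shows "inner v w = 0"
  using assms(2)
  by (induction rule: span_induct) (use assms(1) in \<open>auto simp: subspace_def inner_add_right\<close>)

lemma proj_eq:
  fixes x :: "'a::real_inner"
  assumes "p \<in> span S" "\<forall>s\<in>S. inner (x - p) s = 0"
  shows "proj S x = p"
  unfolding proj_def
proof (rule the_equality)
  show "p \<in> span S \<and> (\<forall>s\<in>S. inner (x - p) s = 0)" using assms by auto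
next
  fix q assume q: "q \<in> span S \<and> (\<forall>s\<in>S. inner (x - q) s = 0)"
  have "\<forall>s\<in>S. inner (p - q) s = 0"
    using q assms(2) by (simp add: inner_diff_left)
  moreover have "p - q \<in> span S" using q assms(1) by (simp add: span_diff)
  ultimately have "inner (p - q) (p - q) = 0" using orth_span by blast
  then show "q = p" by simp
qed

lemma proj_exists:
  fixes x :: "'a::real_inner"
  assumes "finite S"
  shows "\<exists>p\<in>span S. \<forall>s\<in>S. inner (x - p) s = 0"
  using assms
proof (induction arbitrary: x rule: finite_induct)
  case empty then show ?case by (auto simp: span_zero)
next
  case (insert a S)
  obtain p' where p': "p' \<in> span S" "\<forall>s\<in>S. inner (x - p') s = 0"
    using insert.IH by blast
  obtain q' where q': "q' \<in> span S" "\<forall>s\<in>S. inner (a - q') s = 0"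
    using insert.IH by blast
  define e where "e = a - q'"
  have eS: "\<forall>s\<in>S. inner e s = 0" using q' e_def by auto
  have eq': "inner e q' = 0" using orth_span[OF eS q'(1)] .
  have xq': "inner (x - p') q' = 0" using orth_span[OF p'(2) q'(1)] .
  show ?case
  proof (cases "e = 0")
    case True
    then have "a \<in> span S" using q' e_def by simp
    then have "inner (x - p') a = 0" using orth_span[OF p'(2)] by blast
    then show ?thesis using p' by (auto intro: span_mono[THEN subsetD, of S "insert a S"])
  next
    case False
    define \<alpha> where "\<alpha> = inner (x - p') e / inner e e"
    define p where "p = p' + \<alpha> *\<^sub>R e"
    have "p \<in> span (insert a S)"
      unfolding p_def e_def
      by (meson insert_subset span_add span_base span_diff span_mono span_scale subset_iff p'(1) q'(1) insertI1 subset_insertI)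
    moreover have "\<forall>s\<in>S. inner (x - p) s = 0"
      using p'(2) eS by (simp add: p_def inner_diff_left inner_add_left algebra_simps)
    moreover have "inner (x - p) a = 0"
    proof -
      have a: "a = e + q'" using e_def by simp
      have ee: "inner e e \<noteq> 0" using False by simp
      have "inner (x - p) a = inner (x - p') e - \<alpha> * inner e e"
        unfolding a p_def using eq' xq'
        by (simp add: inner_diff_left inner_add_right inner_add_left algebra_simps)
      also have "\<dots> = 0" using ee by (simp add: \<alpha>_def)
      finally show ?thesis .
    qed
    ultimately show ?thesis by auto
  qed
qed


lemma vars_image: "vars y m T = (\<lambda>(t,i). y t i) ` (T \<times> {..<m})"
  by (auto simp: vars_def)

lemma finite_vars: "finite T \<Longrightarrow> finite (vars y m T)"
  by (simp add: vars_image)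

lemma span_vars_coeffs:
  fixes y :: "int \<Rightarrow> nat \<Rightarrow> 'a::real_inner"
  assumes "v \<in> span (vars y m ((\<lambda>k. t - k) ` K))" and fin: "finite K"
  shows "\<exists>c. v = (\<Sum>k\<in>K. \<Sum>j<m. c k j *\<^sub>R y (t - k) j)"
  using assms(1)
proof (induction rule: span_induct)
  case (step x)
  then obtain k j where kj: "k \<in> K" "j < m" "x = y (t - k) j" by (auto simp: vars_def)
  show ?case
  proof (intro exI[of _ "\<lambda>k' j'. if k' = k \<and> j' = j then 1 else 0"])
    have "(\<Sum>k'\<in>K. \<Sum>j'<m. (if k' = k \<and> j' = j then 1 else 0) *\<^sub>R y (t - k') j')
        = (\<Sum>k'\<in>K. if k' = k then y (t - k') j else 0)"
    proof (rule sum.cong)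
      fix k' assume "k' \<in> K"
      have "(\<Sum>j'<m. (if k' = k \<and> j' = j then 1 else 0) *\<^sub>R y (t - k') j')
          = (\<Sum>j'<m. if j' = j then (if k' = k then y (t - k') j' else 0) else 0)"
        by (rule sum.cong) auto
      also have "\<dots> = (if k' = k then y (t - k') j else 0)" using kj by simp
      finally show "(\<Sum>j'<m. (if k' = k \<and> j' = j then 1 else 0) *\<^sub>R y (t - k') j') = (if k' = k then y (t - k') j else 0)" .
    qed simp
    also have "\<dots> = x" using kj fin by simp
    finally show "x = (\<Sum>k'\<in>K. \<Sum>j'<m. (if k' = k \<and> j' = j then 1 else 0) *\<^sub>R y (t - k') j')" by simp
  qed
next
  case base
  show ?case unfolding subspace_def
  proof (intro conjI ballI allI)
    show "0 \<in> {v. \<exists>c. v = (\<Sum>k\<in>K. \<Sum>j<m. c k j *\<^sub>R y (t - k) j)}"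
      by (auto intro: exI[of _ "\<lambda>_ _. 0"])
  next
    fix a b assume "a \<in> {v. \<exists>c. v = (\<Sum>k\<in>K. \<Sum>j<m. c k j *\<^sub>R y (t - k) j)}"
      "b \<in> {v. \<exists>c. v = (\<Sum>k\<in>K. \<Sum>j<m. c k j *\<^sub>R y (t - k) j)}"
    then obtain c1 c2 where "a = (\<Sum>k\<in>K. \<Sum>j<m. c1 k j *\<^sub>R y (t - k) j)"
      "b = (\<Sum>k\<in>K. \<Sum>j<m. c2 k j *\<^sub>R y (t - k) j)" by auto
    then show "a + b \<in> {v. \<exists>c. v = (\<Sum>k\<in>K. \<Sum>j<m. c k j *\<^sub>R y (t - k) j)}"
      by (auto intro!: exI[of _ "\<lambda>k j. c1 k j + c2 k j"] simp: scaleR_add_left sum.distrib)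
  next
    fix r :: real and a assume "a \<in> {v. \<exists>c. v = (\<Sum>k\<in>K. \<Sum>j<m. c k j *\<^sub>R y (t - k) j)}"
    then obtain c1 where "a = (\<Sum>k\<in>K. \<Sum>j<m. c1 k j *\<^sub>R y (t - k) j)" by auto
    then show "r *\<^sub>R a \<in> {v. \<exists>c. v = (\<Sum>k\<in>K. \<Sum>j<m. c k j *\<^sub>R y (t - k) j)}"
      by (auto intro!: exI[of _ "\<lambda>k j. r * c1 k j"] simp: scaleR_sum_right)
  qed
qed

lemma stat_shift:
  assumes "stationary y m" "i < m" "j < m"
  shows "inner (y a i) (y b j) = inner (y (a - d) i) (y (b - d) j)"
  using assms unfolding stationary_def
  by (metis diff_add_cancel)

lemma times_eq:
  "{t - 1 - int n + 1..t - 1} \<union> {t + 1..t + 1 + int n - 1} = (\<lambda>k. t - k) ` ({- int n..int n} - {0})"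
proof
  show "{t - 1 - int n + 1..t - 1} \<union> {t + 1..t + 1 + int n - 1} \<subseteq> (\<lambda>k. t - k) ` ({- int n..int n} - {0})"
  proof
    fix x assume "x \<in> {t - 1 - int n + 1..t - 1} \<union> {t + 1..t + 1 + int n - 1}"
    then show "x \<in> (\<lambda>k. t - k) ` ({- int n..int n} - {0})"
      by (intro rev_image_eqI[of "t - x"]) auto
  qed
qed auto

lemma mod_ne:
  fixes s t :: int
  assumes "N > 2 * n" "s \<in> (\<lambda>k. t - k) ` ({- int n..int n} - {0})"
  shows "s mod int N \<noteq> t mod int N"
proof
  assume "s mod int N = t mod int N"
  then have d: "int N dvd (s - t)" by (simp add: mod_eq_dvd_iff)
  from assms(2) have ne: "s - t \<noteq> 0" "\<bar>s - t\<bar> \<le> int n" by auto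
  have "\<bar>int N\<bar> \<le> \<bar>s - t\<bar>" using dvd_imp_le_int[OF ne(1) d] .
  then show False using ne(2) assms(1) by simp
qed


lemma proj_B:
  fixes y :: "int \<Rightarrow> nat \<Rightarrow> 'a::real_inner"
  assumes rec: "reciprocal y m N n" and N: "N > 2 * n" and i: "i < m"
    and q: "q \<in> span (vars y m ((\<lambda>k. t - k) ` ({- int n..int n} - {0})))"
    and qo: "\<forall>s\<in>vars y m ((\<lambda>k. t - k) ` ({- int n..int n} - {0})). inner (y t i - q) s = 0"
  shows "proj (vars y m {s. s mod int N \<noteq> t mod int N}) (y t i) = q"
proof -
  define C where "C = vars y m ((\<lambda>k. t - k) ` ({- int n..int n} - {0}))"
  define B where "B = vars y m {s. s mod int N \<noteq> t mod int N}"
  have ts: "{t'. t - 1 < t' \<and> t' < t + 1} = {t}" by auto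
  have bs: "{s. \<forall>t'. t - 1 < t' \<and> t' < t + 1 \<longrightarrow> s mod int N \<noteq> t' mod int N} = {s. s mod int N \<noteq> t mod int N}"
  proof -
    have "\<And>t'::int. (t - 1 < t' \<and> t' < t + 1) = (t' = t)" by arith
    then show ?thesis by simp
  qed
  have co: "cond_orth (vars y m {t}) B C"
    using rec[unfolded reciprocal_def, rule_format, of "t - 1" "t + 1"]
    unfolding ts bs times_eq B_def C_def by simp
  have finC: "finite C" unfolding C_def by (intro finite_vars) auto
  have CB: "C \<subseteq> B"
    unfolding C_def B_def vars_def using mod_ne[OF N] by blast
  have A: "y t i \<in> span (vars y m {t})" using i by (intro span_base) (auto simp: vars_def)
  have pa: "proj C (y t i) = q" using proj_eq q qo unfolding C_def by blast
  have "\<forall>b\<in>B. inner (y t i - q) b = 0"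
  proof
    fix b assume b: "b \<in> B"
    obtain pb where pb: "pb \<in> span C" "\<forall>s\<in>C. inner (b - pb) s = 0"
      using proj_exists[OF finC] by blast
    have "proj C b = pb" using proj_eq[OF pb] .
    then have "inner (y t i - q) (b - pb) = 0"
      using co A b pa unfolding cond_orth_def by (auto intro: span_base)
    moreover have "inner (y t i - q) pb = 0"
      using orth_span[OF _ pb(1)] qo unfolding C_def by blast
    ultimately show "inner (y t i - q) b = 0" by (simp add: inner_diff_right)
  qed
  moreover have "q \<in> span B" using q CB span_mono unfolding C_def by blast
  ultimately show ?thesis unfolding B_def using proj_eq by blast
qed


lemma coeffs_exist:
  fixes y :: "int \<Rightarrow> nat \<Rightarrow> 'a::real_inner"
  assumes rec: "reciprocal y m N n" and N: "N > 2 * n" and st: "stationary y m" and i: "i < m"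
  shows "\<exists>c. \<forall>t. proj (vars y m {s. s mod int N \<noteq> t mod int N}) (y t i)
             = (\<Sum>k\<in>{- int n..int n} - {0}. \<Sum>j<m. c k j *\<^sub>R y (t - k) j)"
proof -
  define K where "K = {- int n..int n} - {0}"
  have finK: "finite K" unfolding K_def by simp
  obtain p0 where p0: "p0 \<in> span (vars y m ((\<lambda>k. 0 - k) ` K))"
      "\<forall>s\<in>vars y m ((\<lambda>k. 0 - k) ` K). inner (y 0 i - p0) s = 0"
    using proj_exists[OF finite_vars[OF finite_imageI[OF finK]]] by blast
  obtain c where c: "p0 = (\<Sum>k\<in>K. \<Sum>j<m. c k j *\<^sub>R y (0 - k) j)"
    using span_vars_coeffs[OF p0(1) finK] by blast
  show ?thesis
  proof (intro exI allI, fold K_def)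
    fix t
    define q where "q = (\<Sum>k\<in>K. \<Sum>j<m. c k j *\<^sub>R y (t - k) j)"
    have qs: "q \<in> span (vars y m ((\<lambda>k. t - k) ` K))"
      unfolding q_def
      by (intro span_sum span_scale span_base) (auto simp: vars_def)
    have qo: "\<forall>s\<in>vars y m ((\<lambda>k. t - k) ` K). inner (y t i - q) s = 0"
    proof
      fix s assume "s \<in> vars y m ((\<lambda>k. t - k) ` K)"
      then obtain l j' where l: "l \<in> K" "j' < m" "s = y (t - l) j'" by (auto simp: vars_def)
      have "inner (y t i - q) (y (t - l) j') = inner (y 0 i - p0) (y (0 - l) j')"
      proof -
        have e1: "inner (y t i) (y (t - l) j') = inner (y 0 i) (y (- l) j')"
          using stat_shift[OF st i l(2), of t "t - l" t] by simp
        have e2: "\<And>k j. j < m \<Longrightarrow> inner (y (t - k) j) (y (t - l) j') = inner (y (- k) j) (y (- l) j')"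
        proof -
          fix k j assume j: "j < m"
          show "inner (y (t - k) j) (y (t - l) j') = inner (y (- k) j) (y (- l) j')"
            using stat_shift[OF st j l(2), of "t - k" "t - l" t] by simp
        qed
        show ?thesis
          unfolding q_def c
          by (simp add: inner_diff_left inner_sum_left e1 e2)
      qed
      also have "\<dots> = 0" using p0(2) l by (auto simp: vars_def)
      finally show "inner (y t i - q) s = 0" using l by simp
    qed
    show "proj (vars y m {s. s mod int N \<noteq> t mod int N}) (y t i) = q"
      using proj_B[OF rec N i] qs qo unfolding K_def by blast
  qed
qed


lemma delta_sum:
  fixes y :: "nat \<Rightarrow> 'a::real_vector"
  assumes "i < m"
  shows "(\<Sum>j<m. (if i = j then 1 else 0) *\<^sub>R y j) = y i"
proof -
  have "(\<Sum>j<m. (if i = j then 1 else 0) *\<^sub>R y j) = (\<Sum>j<m. if i = j then y j else 0)"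
    by (rule sum.cong) auto
  then show ?thesis using assms by simp
qed

lemma existence:
  fixes y :: "int \<Rightarrow> nat \<Rightarrow> 'a::real_inner"
  assumes rec: "reciprocal y m N n" and N: "N > 2 * n" and st: "stationary y m"
  shows "\<exists>F. recip_model F y m n N (conj_proc y m N)"
proof -
  define K where "K = {- int n..int n} - {0}"
  have ex: "\<forall>i\<in>{..<m}. \<exists>c. \<forall>t. proj (vars y m {s. s mod int N \<noteq> t mod int N}) (y t i)
             = (\<Sum>k\<in>K. \<Sum>j<m. c k j *\<^sub>R y (t - k) j)"
    using coeffs_exist[OF rec N st] unfolding K_def by blast
  from bchoice[OF ex] obtain c where c0: "\<forall>i\<in>{..<m}. \<forall>t. proj (vars y m {s. s mod int N \<noteq> t mod int N}) (y t i)
             = (\<Sum>k\<in>K. \<Sum>j<m. c i k j *\<^sub>R y (t - k) j)"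
    by blast
  have c: "\<And>i t. i < m \<Longrightarrow> proj (vars y m {s. s mod int N \<noteq> t mod int N}) (y t i)
             = (\<Sum>k\<in>K. \<Sum>j<m. c i k j *\<^sub>R y (t - k) j)"
    using c0 by blast
  define F where "F k i j = (if k = 0 then (if i = j then 1 else 0) else - c i k j)" for k i j
  have "recip_model F y m n N (conj_proc y m N)"
    unfolding recip_model_def
  proof (intro conjI ballI allI impI)
    fix i j assume "i < m" "j < m" then show "F 0 i j = (if i = j then 1 else 0)" by (simp add: F_def)
  next
    fix t i assume i: "i < m"
    have "(\<Sum>k\<in>{- int n..int n}. \<Sum>j<m. F k i j *\<^sub>R y (t - k) j)
        = (\<Sum>j<m. F 0 i j *\<^sub>R y (t - 0) j) + (\<Sum>k\<in>K. \<Sum>j<m. F k i j *\<^sub>R y (t - k) j)"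
      unfolding K_def by (subst sum.remove[of _ 0]) auto
    also have "(\<Sum>j<m. F 0 i j *\<^sub>R y (t - 0) j) = y t i"
      using delta_sum[OF i] by (simp add: F_def)
    also have "(\<Sum>k\<in>K. \<Sum>j<m. F k i j *\<^sub>R y (t - k) j) = - (\<Sum>k\<in>K. \<Sum>j<m. c i k j *\<^sub>R y (t - k) j)"
      unfolding K_def F_def by (simp add: sum_negf)
    finally show "(\<Sum>k\<in>{- int n..int n}. \<Sum>j<m. F k i j *\<^sub>R y (t - k) j) = conj_proc y m N t i"
      unfolding conj_proc_def using c[OF i, of t] by simp
  qed
  then show ?thesis by blast
qed


lemma uniqueness:
  fixes y :: "int \<Rightarrow> nat \<Rightarrow> 'a::real_inner"
  assumes N: "N > 2 * n" and fr: "full_rank y m N"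
    and F: "recip_model F y m n N d" and G: "recip_model G y m n N d"
  shows "\<forall>k\<in>{- int n..int n}. \<forall>i<m. \<forall>j<m. F k i j = G k i j"
proof (intro ballI allI impI)
  fix k0 i j0 assume k0: "k0 \<in> {- int n..int n}" and i: "i < m" and j0: "j0 < m"
  define t0 where "t0 = int n + 1"
  have t0: "t0 \<in> {1..int N}" using N unfolding t0_def by auto
  have eq: "(\<Sum>k\<in>{- int n..int n}. \<Sum>j<m. (F k i j - G k i j) *\<^sub>R y (t0 - k) j) = 0"
  proof -
    have "(\<Sum>k\<in>{- int n..int n}. \<Sum>j<m. F k i j *\<^sub>R y (t0 - k) j) = d t0 i"
         "(\<Sum>k\<in>{- int n..int n}. \<Sum>j<m. G k i j *\<^sub>R y (t0 - k) j) = d t0 i"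
      using F G t0 i unfolding recip_model_def by auto
    then show ?thesis by (simp add: scaleR_diff_left sum_subtractf)
  qed
  define c where "c s j = (if s \<in> {1..2 * int n + 1} then F (t0 - s) i j - G (t0 - s) i j else 0)" for s j
  define v where "v = (\<Sum>s\<in>{1..int N}. \<Sum>j<m. c s j *\<^sub>R y s j)"
  have "v = (\<Sum>s\<in>{1..2 * int n + 1}. \<Sum>j<m. c s j *\<^sub>R y s j)"
    unfolding v_def
    by (rule sum.mono_neutral_right) (use N in \<open>auto simp: c_def\<close>)
  also have "\<dots> = (\<Sum>k\<in>{- int n..int n}. \<Sum>j<m. (F k i j - G k i j) *\<^sub>R y (t0 - k) j)"
    by (rule sum.reindex_bij_witness[of _ "\<lambda>s. t0 - s" "\<lambda>k. t0 - k"]) (auto simp: c_def t0_def)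
  finally have v0: "v = 0" using eq by simp
  have "(\<Sum>t\<in>{1..int N}. \<Sum>i<m. \<Sum>s\<in>{1..int N}. \<Sum>j<m. c t i * c s j * inner (y t i) (y s j)) = inner v v"
  proof -
    have h: "\<And>a. inner a v = (\<Sum>s\<in>{1..int N}. \<Sum>j<m. c s j * inner a (y s j))"
      by (simp add: v_def inner_sum_right)
    have "inner v v = (\<Sum>t\<in>{1..int N}. \<Sum>i<m. c t i * inner (y t i) v)"
      by (subst (1) v_def) (simp add: inner_sum_left)
    also have "\<dots> = (\<Sum>t\<in>{1..int N}. \<Sum>i<m. \<Sum>s\<in>{1..int N}. \<Sum>j<m. c t i * c s j * inner (y t i) (y s j))"
      by (simp add: h sum_distrib_left mult.assoc)
    finally show ?thesis by simp
  qed
  also have "\<dots> = 0" using v0 by simp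
  finally have qf: "(\<Sum>t\<in>{1..int N}. \<Sum>i<m. \<Sum>s\<in>{1..int N}. \<Sum>j<m. c t i * c s j * inner (y t i) (y s j)) = 0" .
  have "\<not> (\<exists>t\<in>{1..int N}. \<exists>i<m. c t i \<noteq> 0)"
  proof
    assume "\<exists>t\<in>{1..int N}. \<exists>i<m. c t i \<noteq> 0"
    then have "(\<Sum>t\<in>{1..int N}. \<Sum>i<m. \<Sum>s\<in>{1..int N}. \<Sum>j<m. c t i * c s j * inner (y t i) (y s j)) > 0"
      using fr unfolding full_rank_def by blast
    then show False using qf by simp
  qed
  moreover have "t0 - k0 \<in> {1..int N}" using k0 N unfolding t0_def by auto
  ultimately have "c (t0 - k0) j0 = 0" using j0 by blast
  then show "F k0 i j0 = G k0 i j0" using k0 unfolding c_def t0_def by auto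
qed

theorem theorem1:
  fixes y :: "int \<Rightarrow> nat \<Rightarrow> 'a::real_inner" and m n N :: nat
  assumes "m \<ge> 1" and "n \<ge> 1" and "N > 2 * n"
    and "periodic_proc y N" and "stationary y m" and "reciprocal y m N n"
  shows "(\<exists>F. recip_model F y m n N (conj_proc y m N)) \<and>
         (full_rank y m N \<longrightarrow>
            (\<forall>F G. recip_model F y m n N (conj_proc y m N) \<and> recip_model G y m n N (conj_proc y m N)
               \<longrightarrow> (\<forall>k\<in>{- int n..int n}. \<forall>i<m. \<forall>j<m. F k i j = G k i j)))"
  using existence[OF assms(6,3,5)] uniqueness[OF assms(3)] by blast

end
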